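(* Under Assumptions 1–2, assume $k_\ell<m_\ell n_\ell$ for all $\ell$. (i) If $0<\beta_1\le1$, $\tau\ge\frac{64}{3\beta_1\underline\delta}$ and $0<\eta\le\min\Big\{\frac1{4L},\sqrt{\frac{3\underline\delta\beta_1^2}{80L^2}},\sqrt{\frac{3\underline\delta}{80\tau^2L^2}},\sqrt{\frac{3\beta_1}{16\tau L^2}}\Big\}$, then deterministic GaSare with MSGD satisfies $\frac1{K\tau}\sum_{t=0}^{K\tau-1}\|\nabla f(x^{(t)})\|_2^2\le\frac{16\Delta}{\underline\delta\eta K\tau}$ for every integer $K\ge1$. (ii) If moreover $\Delta>0$, $T\ge64/(3\underline\delta)$ is an integer and one chooses $\beta_1=1$, $\tau=\lceil64/(3\underline\delta\beta_1)\rceil$, $\eta=\Big(4L+\sqrt{\tfrac{80L^2}{3\underline\delta\beta_1^2}}+\sqrt{\tfrac{80\tau^2L^2}{3\underline\delta}}+\sqrt{\tfrac{16\tau L^2}{3\beta_1}}\Big)^{-1}$, then $\frac1T\sum_{t=0}^{T-1}\|\nabla f(x^{(t)})\|_2^2\le C\frac{L\Delta}{\underline\delta^{5/2}T}$ for an absolute constant $C$.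
   Context: Parameters $x=(\mathrm{vec}(X_1)^\top,\dots,\mathrm{vec}(X_{N_L})^\top)^\top\in\mathbb{R}^d$, $X_\ell\in\mathbb{R}^{m_\ell\times n_\ell}$; $\nabla_\ell$ is the gradient w.r.t. $X_\ell$. Assumption 1: $\inf f>-\infty$. Assumption 2: $\nabla f$ is $L$-Lipschitz in $\|\cdot\|_2$. $\Delta=f(x^{(0)})-\inf f$, $\delta_\ell=k_\ell/(m_\ell n_\ell)$, $\underline\delta=\min_\ell\delta_\ell$. Deterministic GaSare with MSGD: $M_\ell^{(-1)}=0$. For $t\ge0$, $G_\ell^{(t)}=\nabla_\ell f(x^{(t)})$; if $t\equiv0\pmod\tau$, $S_\ell^{(t)}$ is a Top-$k_\ell$ mask of $G_\ell^{(t)}$ (the $0/1$ matrix with exactly $k_\ell$ ones at positions of $k_\ell$ entries of largest absolute value, ties arbitrary), else $S_\ell^{(t)}=S_\ell^{(t-1)}$; $M_\ell^{(t)}=(1-\beta_1)S_\ell^{(t)}\odot M_\ell^{(t-1)}+\beta_1S_\ell^{(t)}\odot G_\ell^{(t)}$; $X_\ell^{(t+1)}=X_\ell^{(t)}-\eta S_\ell^{(t)}\odot M_\ell^{(t)}$ ($\odot$ = entrywise product). *)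

theory Defs
  imports "HOL-Analysis.Analysis"
begin

definition layer_dom :: "nat \<Rightarrow> (nat \<Rightarrow> nat) \<Rightarrow> (nat \<Rightarrow> nat) \<Rightarrow> (nat \<times> nat \<times> nat) set" where
  "layer_dom NL m n = {(l, i, j). l < NL \<and> i < m l \<and> j < n l}"

definition layer :: "('i \<Rightarrow> nat \<times> nat \<times> nat) \<Rightarrow> nat \<Rightarrow> 'i set" where
  "layer coord l = {c. fst (coord c) = l}"

definition mask :: "'i set \<Rightarrow> real ^ 'i::finite" where
  "mask S = (\<chi> c. if c \<in> S then 1 else 0)"

definition is_topk_mask ::
  "('i::finite \<Rightarrow> nat \<times> nat \<times> nat) \<Rightarrow> nat \<Rightarrow> (nat \<Rightarrow> nat) \<Rightarrow> real ^ 'i \<Rightarrow> 'i set \<Rightarrow> bool" where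
  "is_topk_mask coord NL k G S \<longleftrightarrow>
     (\<forall>l<NL. card (S \<inter> layer coord l) = k l) \<and>
     (\<forall>l<NL. \<forall>a \<in> S \<inter> layer coord l. \<forall>b \<in> layer coord l - S. \<bar>G $ b\<bar> \<le> \<bar>G $ a\<bar>)"

text \<open>A run (x, M, S) of deterministic GaSare with MSGD, with gradient field g.
  M t is M^(t); M^(-1) = 0; the product * on real^'i is the entrywise product.\<close>
definition gasare_msgd ::
  "('i::finite \<Rightarrow> nat \<times> nat \<times> nat) \<Rightarrow> nat \<Rightarrow> (nat \<Rightarrow> nat) \<Rightarrow> nat \<Rightarrow> real \<Rightarrow> real \<Rightarrow>
   (real ^ 'i \<Rightarrow> real ^ 'i) \<Rightarrow> (nat \<Rightarrow> real ^ 'i) \<Rightarrow> (nat \<Rightarrow> real ^ 'i) \<Rightarrow> (nat \<Rightarrow> 'i set) \<Rightarrow> bool" where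
  "gasare_msgd coord NL k \<tau> \<beta>1 \<eta> g x M S \<longleftrightarrow>
     (\<forall>t. (if t mod \<tau> = 0 then is_topk_mask coord NL k (g (x t)) (S t) else S t = S (t - 1))
        \<and> M t = (1 - \<beta>1) *\<^sub>R (mask (S t) * (if t = 0 then 0 else M (t - 1)))
                 + \<beta>1 *\<^sub>R (mask (S t) * g (x t))
        \<and> x (Suc t) = x t - \<eta> *\<^sub>R (mask (S t) * M t))"

definition delta_min :: "nat \<Rightarrow> (nat \<Rightarrow> nat) \<Rightarrow> (nat \<Rightarrow> nat) \<Rightarrow> (nat \<Rightarrow> nat) \<Rightarrow> real" where
  "delta_min NL m n k = Min ((\<lambda>l. real (k l) / real (m l * n l)) ` {..<NL})"

end

theory Submission
  imports Defs
begin

lemma norm2_sum: "(norm (v::real^'i::finite))^2 = (\<Sum>c\<in>UNIV. (v$c)^2)"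
proof -
  have "(norm v)^2 = v \<bullet> v" by (rule power2_norm_eq_inner)
  also have "\<dots> = (\<Sum>c\<in>UNIV. (v$c)^2)" by (simp add: inner_vec_def power2_eq_square)
  finally show ?thesis .
qed

lemma mask_nth [simp]: "mask S $ c = (if c \<in> S then 1 else 0)"
  by (simp add: mask_def)

lemma norm_mask_le: "norm (mask S * (v::real^'i::finite)) \<le> norm v"
proof -
  have "(norm (mask S * v))^2 \<le> (norm v)^2"
    unfolding norm2_sum by (rule sum_mono) auto
  thus ?thesis by (simp add: power2_le_iff_abs_le)
qed

lemma mask_idem [simp]: "mask S * (mask S * v) = mask S * (v::real^'i::finite)"
  by (simp add: vec_eq_iff)

lemma mask_inner: "(g::real^'i::finite) \<bullet> (mask S * w) = (mask S * g) \<bullet> w"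
  by (simp add: inner_vec_def ac_simps)

lemma mask_restart: "(norm (mask S * a - (b::real^'i::finite)))^2 \<le> (norm (a - b))^2 + (norm b)^2"
  unfolding norm2_sum sum.distrib[symmetric] by (rule sum_mono) auto

lemma mask_diff: "mask S * a - mask S * b = mask S * (a - (b::real^'i::finite))"
  by (simp add: vec_eq_iff algebra_simps)


lemma descent:
  fixes f :: "real^'i::finite \<Rightarrow> real" and g :: "real^'i \<Rightarrow> real^'i"
  assumes grad: "\<And>x. (f has_derivative (\<lambda>h. g x \<bullet> h)) (at x)"
    and lip: "\<And>x y. norm (g x - g y) \<le> L * norm (x - y)"
  shows "f y \<le> f x + g x \<bullet> (y - x) + L / 2 * (norm (y - x))^2"
proof -
  define h where "h = y - x"
  define \<phi> where "\<phi> s = f (x + s *\<^sub>R h) - s * (g x \<bullet> h) - L / 2 * s^2 * (norm h)^2" for s :: real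
  have d: "DERIV \<phi> s :> (g (x + s *\<^sub>R h) \<bullet> h - g x \<bullet> h - L * s * (norm h)^2)" for s
  proof -
    have l: "((\<lambda>s. x + s *\<^sub>R h) has_derivative (\<lambda>t. t *\<^sub>R h)) (at s)"
      by (auto intro!: derivative_eq_intros)
    have c: "((\<lambda>s. f (x + s *\<^sub>R h)) has_derivative (\<lambda>t. g (x + s *\<^sub>R h) \<bullet> (t *\<^sub>R h))) (at s)"
      using has_derivative_compose[OF l grad] by simp
    hence c': "((\<lambda>s. f (x + s *\<^sub>R h)) has_real_derivative (g (x + s *\<^sub>R h) \<bullet> h)) (at s)"
      unfolding has_field_derivative_def by (simp add: mult.commute[of _ "g (x + s *\<^sub>R h) \<bullet> h"])
    show ?thesis unfolding \<phi>_def
      by (auto intro!: derivative_eq_intros c')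
  qed
  have "\<phi> 1 \<le> \<phi> 0"
  proof (rule DERIV_nonpos_imp_nonincreasing[of 0 1 \<phi>])
    fix s :: real assume s: "0 \<le> s" "s \<le> 1"
    have "g (x + s *\<^sub>R h) \<bullet> h - g x \<bullet> h = (g (x + s *\<^sub>R h) - g x) \<bullet> h"
      by (simp add: inner_diff_left)
    also have "\<dots> \<le> norm (g (x + s *\<^sub>R h) - g x) * norm h"
      by (rule norm_cauchy_schwarz)
    also have "\<dots> \<le> (L * norm (s *\<^sub>R h)) * norm h"
      using lip[of "x + s *\<^sub>R h" x] by (intro mult_right_mono) auto
    also have "\<dots> = L * s * (norm h)^2" using s by (simp add: power2_eq_square)
    finally have "g (x + s *\<^sub>R h) \<bullet> h - g x \<bullet> h - L * s * (norm h)^2 \<le> 0" by simp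
    thus "\<exists>y. DERIV \<phi> s :> y \<and> y \<le> 0" using d[of s] by blast
  qed auto
  thus ?thesis unfolding \<phi>_def h_def by (simp add: algebra_simps)
qed


lemma double_sum_ineq:
  fixes y :: "'a \<Rightarrow> real"
  assumes "finite C" "finite U" "\<And>a b. a \<in> C \<Longrightarrow> b \<in> U \<Longrightarrow> y b \<le> y a"
  shows "real (card C) * sum y U \<le> real (card U) * sum y C"
proof -
  have "0 \<le> (\<Sum>a\<in>C. \<Sum>b\<in>U. y a - y b)"
    using assms by (intro sum_nonneg) auto
  also have "\<dots> = real (card U) * sum y C - real (card C) * sum y U"
    by (simp add: sum_subtractf sum_distrib_left sum.swap[of _ C U] sum_distrib_right mult.commute)
  finally show ?thesis by simp
qed

lemma layer_card:
  assumes coord: "bij_betw coord UNIV (layer_dom NL m n)" and l: "l < NL"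
  shows "card (layer coord l) = m l * n l"
proof -
  have inj: "inj coord" using coord by (simp add: bij_betw_def)
  have "coord ` layer coord l = {l} \<times> {..<m l} \<times> {..<n l}"
  proof
    show "coord ` layer coord l \<subseteq> {l} \<times> {..<m l} \<times> {..<n l}"
    proof
      fix p assume "p \<in> coord ` layer coord l"
      then obtain c where c: "p = coord c" "fst (coord c) = l" by (auto simp: layer_def)
      have "coord c \<in> layer_dom NL m n" using bij_betw_apply[OF coord] by auto
      thus "p \<in> {l} \<times> {..<m l} \<times> {..<n l}" using c
        by (cases "coord c") (auto simp: layer_dom_def)
    qed
    show "{l} \<times> {..<m l} \<times> {..<n l} \<subseteq> coord ` layer coord l"
    proof
      fix p assume p: "p \<in> {l} \<times> {..<m l} \<times> {..<n l}"
      hence "p \<in> layer_dom NL m n" using l by (auto simp: layer_dom_def)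
      then obtain c where "coord c = p" using coord unfolding bij_betw_def by (metis imageE)
      thus "p \<in> coord ` layer coord l" using p by (auto simp: layer_def)
    qed
  qed
  hence "card (coord ` layer coord l) = m l * n l" by (simp add: card_cartesian_product)
  thus ?thesis using card_image[OF inj_on_subset[OF inj subset_UNIV]] by metis
qed

lemma coord_fst:
  assumes coord: "bij_betw coord UNIV (layer_dom NL m n)"
  shows "fst (coord c) < NL"
  using bij_betw_apply[OF coord, of c] by (cases "coord c") (auto simp: layer_dom_def)

lemma delta_le:
  assumes "l < NL"
  shows "delta_min NL m n k \<le> real (k l) / real (m l * n l)"
  unfolding delta_min_def using assms by (intro Min_le) auto

lemma topk_bound:
  fixes G :: "real^'i::finite"
  assumes coord: "bij_betw coord UNIV (layer_dom NL m n)"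
    and klt: "\<And>l. l < NL \<Longrightarrow> k l < m l * n l"
    and tk: "is_topk_mask coord NL k G S"
  shows "delta_min NL m n k * (norm G)^2 \<le> (norm (mask S * G))^2"
proof -
  define y where "y c = (G $ c)^2" for c
  define \<delta> where "\<delta> = delta_min NL m n k"
  have lay: "\<delta> * sum y (layer coord l) \<le> sum y (S \<inter> layer coord l)" if l: "l < NL" for l
  proof -
    define C where "C = S \<inter> layer coord l"
    define U where "U = layer coord l - S"
    have cC: "card C = k l" using tk l unfolding is_topk_mask_def C_def by auto
    have N: "card (layer coord l) = m l * n l" by (rule layer_card[OF coord l])
    have disj: "layer coord l = C \<union> U" "C \<inter> U = {}" unfolding C_def U_def by auto
    have cU: "card U = m l * n l - k l"
      using N cC disj card_Un_disjoint[of C U] by (metis add_diff_cancel_left' finite)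
    have ord: "y b \<le> y a" if "a \<in> C" "b \<in> U" for a b
    proof -
      have "\<bar>G $ b\<bar> \<le> \<bar>G $ a\<bar>" using tk l that unfolding is_topk_mask_def C_def U_def by auto
      thus ?thesis unfolding y_def by (simp add: abs_le_square_iff)
    qed
    have di: "real (card C) * sum y U \<le> real (card U) * sum y C"
      by (rule double_sum_ineq) (use ord in auto)
    have pos: "0 < m l * n l" by (rule le_less_trans[OF zero_le klt[OF l]])
    have sl: "sum y (layer coord l) = sum y C + sum y U"
      using disj by (simp add: sum.union_disjoint)
    have "real (k l) * sum y (layer coord l) \<le> real (m l * n l) * sum y C"
      using di cC cU klt[OF l] sl by (simp add: of_nat_diff algebra_simps)
    hence "real (k l) / real (m l * n l) * sum y (layer coord l) \<le> sum y C"
      using pos by (simp add: field_simps)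
    moreover have "\<delta> * sum y (layer coord l) \<le> real (k l) / real (m l * n l) * sum y (layer coord l)"
      unfolding \<delta>_def by (intro mult_right_mono delta_le l) (simp add: y_def sum_nonneg)
    ultimately show ?thesis unfolding C_def by linarith
  qed
  have grp: "(\<Sum>l<NL. sum h (layer coord l)) = sum h UNIV" for h :: "'i \<Rightarrow> real"
  proof -
    have "(\<Sum>l<NL. sum h {c. c \<in> UNIV \<and> fst (coord c) = l}) = sum h UNIV"
      by (rule sum.group) (use coord_fst[OF coord] in auto)
    thus ?thesis by (simp add: layer_def)
  qed
  have "\<delta> * (norm G)^2 = (\<Sum>l<NL. \<delta> * sum y (layer coord l))"
    by (simp add: norm2_sum grp y_def sum_distrib_left[symmetric])
  also have "\<dots> \<le> (\<Sum>l<NL. sum y (S \<inter> layer coord l))"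
    by (rule sum_mono) (rule lay, simp)
  also have "\<dots> = (\<Sum>l<NL. sum (\<lambda>c. ((mask S * G) $ c)^2) (layer coord l))"
  proof (rule sum.cong[OF refl])
    fix l
    have e: "((mask S * G) $ c)^2 = (if c \<in> S then y c else 0)" for c by (simp add: y_def)
    show "sum y (S \<inter> layer coord l) = sum (\<lambda>c. ((mask S * G) $ c)^2) (layer coord l)"
      unfolding e by (simp add: Int_commute[of S] sum.inter_restrict)
  qed
  also have "\<dots> = (norm (mask S * G))^2" by (simp only: grp norm2_sum)
  finally show ?thesis unfolding \<delta>_def .
qed


lemma sum_sq_le: "(\<Sum>i<j. r i)^2 \<le> real j * (\<Sum>i<j. (r i)^2)" for r :: "nat \<Rightarrow> real"
proof (induction j)
  case 0 then show ?case by simp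
next
  case (Suc j)
  define s where "s = (\<Sum>i<j. r i)"
  define q where "q = (\<Sum>i<j. (r i)^2)"
  have IH: "s^2 \<le> real j * q" using Suc unfolding s_def q_def .
  have "2 * s * r j \<le> q + real j * (r j)^2"
  proof (cases "j = 0")
    case True thus ?thesis by (simp add: s_def q_def sum_nonneg)
  next
    case False
    hence jp: "real j > 0" by simp
    have "0 \<le> (s - real j * r j)^2" by simp
    hence "2 * real j * s * r j \<le> s^2 + (real j)^2 * (r j)^2" by (simp add: power2_eq_square algebra_simps)
    also have "\<dots> \<le> real j * q + (real j)^2 * (r j)^2" using IH by simp
    finally have "real j * (2 * s * r j) \<le> real j * (q + real j * (r j)^2)"
      by (simp add: power2_eq_square algebra_simps)
    thus ?thesis using jp by simp
  qed
  hence "(s + r j)^2 \<le> real (Suc j) * (q + (r j)^2)"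
    using IH by (simp add: power2_eq_square algebra_simps)
  thus ?case by (simp add: s_def q_def)
qed

lemma sq_ineq:
  fixes \<beta> u v :: real
  assumes b: "0 < \<beta>" "\<beta> \<le> 1"
  shows "(1-\<beta>)^2 * (u+v)^2 \<le> (1-\<beta>) * u^2 + v^2 / \<beta>"
proof -
  have "2 * u * v \<le> \<beta> * u^2 + v^2/\<beta>"
  proof -
    have "0 \<le> (\<beta>*u - v)^2" by simp
    hence "2 * \<beta> * u * v \<le> \<beta>^2 * u^2 + v^2" by (simp add: power2_eq_square algebra_simps)
    hence "(2 * \<beta> * u * v) / \<beta> \<le> (\<beta>^2 * u^2 + v^2) / \<beta>" using b by (intro divide_right_mono) auto
    also have "(2 * \<beta> * u * v) / \<beta> = 2 * u * v" using b by simp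
    also have "(\<beta>^2 * u^2 + v^2) / \<beta> = \<beta> * u^2 + v^2/\<beta>" using b by (simp add: power2_eq_square field_simps)
    finally show ?thesis .
  qed
  hence h: "(u+v)^2 \<le> (1+\<beta>) * u^2 + (1 + 1/\<beta>) * v^2" by (simp add: power2_eq_square algebra_simps)
  have "(1-\<beta>)^2 * (u+v)^2 \<le> (1-\<beta>)^2 * ((1+\<beta>) * u^2 + (1 + 1/\<beta>) * v^2)"
    by (rule mult_left_mono[OF h]) simp
  also have "\<dots> = ((1-\<beta>)*(1-\<beta>^2)) * u^2 + ((1-\<beta>)^2*(1+\<beta>)) * (v^2/\<beta>)"
    using b by (simp add: power2_eq_square field_simps)
  also have "\<dots> \<le> (1-\<beta>) * u^2 + 1 * (v^2/\<beta>)"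
  proof (intro add_mono mult_right_mono)
    show "(1-\<beta>)*(1-\<beta>^2) \<le> 1-\<beta>" using b by (simp add: mult_left_le)
    have "(1-\<beta>)^2*(1+\<beta>) = (1-\<beta>)*(1-\<beta>^2)" by (simp add: power2_eq_square algebra_simps)
    also have "\<dots> \<le> 1" using b by (intro mult_le_one) (auto simp: power_le_one)
    finally show "(1-\<beta>)^2*(1+\<beta>) \<le> 1" .
  qed (use b in auto)
  finally show ?thesis by simp
qed

lemma pow_small:
  fixes \<beta> :: real
  assumes "0 < \<beta>" "\<beta> \<le> 1" "7 \<le> real n * \<beta>"
  shows "(1-\<beta>)^n \<le> 1/8"
proof -
  have "1 + real n * \<beta> \<le> (1+\<beta>)^n" using assms by (intro Bernoulli_inequality) simp
  moreover have "(1+\<beta>)^n * (1-\<beta>)^n \<le> 1"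
  proof -
    have "(1+\<beta>)^n * (1-\<beta>)^n = (1 - \<beta>*\<beta>)^n" by (simp add: power_mult_distrib[symmetric] algebra_simps)
    also have "\<dots> \<le> 1" using assms by (intro power_le_one) (auto simp: mult_le_one)
    finally show ?thesis .
  qed
  moreover have p: "0 \<le> (1-\<beta>)^n" using assms by simp
  ultimately have "(1 + real n * \<beta>) * (1-\<beta>)^n \<le> 1"
    using mult_right_mono[of "1 + real n * \<beta>" "(1+\<beta>)^n" "(1-\<beta>)^n"] by linarith
  moreover have "8 * (1-\<beta>)^n \<le> (1 + real n * \<beta>) * (1-\<beta>)^n"
    using assms p by (intro mult_right_mono) auto
  ultimately have "8 * (1-\<beta>)^n \<le> 1" by linarith
  thus ?thesis by simp
qed


locale run =
  fixes f :: "real^'i::finite \<Rightarrow> real" and g :: "real^'i \<Rightarrow> real^'i"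
    and L \<beta> \<eta> \<delta> :: real and \<tau> :: nat
    and x M :: "nat \<Rightarrow> real^'i" and S :: "nat \<Rightarrow> 'i set"
  assumes desc: "\<And>t. f (x (Suc t)) \<le> f (x t) + g (x t) \<bullet> (x (Suc t) - x t) + L / 2 * (norm (x (Suc t) - x t))^2"
    and lip: "\<And>a b. norm (g a - g b) \<le> L * norm (a - b)"
    and Lpos: "L > 0"
    and b0: "0 < \<beta>" and b1: "\<beta> \<le> 1"
    and tau0: "0 < \<tau>"
    and Mdef: "\<And>t. M t = (1-\<beta>) *\<^sub>R (mask (S t) * (if t = 0 then 0 else M (t-1))) + \<beta> *\<^sub>R (mask (S t) * g (x t))"
    and xdef: "\<And>t. x (Suc t) = x t - \<eta> *\<^sub>R (mask (S t) * M t)"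
    and Sconst: "\<And>t. t mod \<tau> \<noteq> 0 \<Longrightarrow> S t = S (t-1)"
    and topk: "\<And>t. t mod \<tau> = 0 \<Longrightarrow> \<delta> * (norm (g (x t)))^2 \<le> (norm (mask (S t) * g (x t)))^2"
    and d0: "0 < \<delta>" and d1: "\<delta> \<le> 1"
    and eta0: "0 < \<eta>" and eta1: "L * \<eta> \<le> 1/4"
    and c1: "64/3 \<le> real \<tau> * \<beta> * \<delta>"
    and c2: "(L * \<eta>)^2 \<le> 3 * \<delta> * \<beta>^2 / 80"
    and c3: "(L * \<eta>)^2 * (real \<tau>)^2 \<le> 3 * \<delta> / 80"
begin

definition "G t = g (x t)"
definition "gg t = (norm (G t))^2"
definition "a t = (norm (mask (S t) * G t))^2"
definition "mm t = (norm (M t))^2"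
definition "E t = M t - mask (S t) * G t"
definition "e t = (norm (E t))^2"
definition "\<epsilon> = (L * \<eta>)^2"

lemma Msupp: "mask (S t) * M t = M t"
  by (subst (2) Mdef, subst Mdef) (simp add: vec_eq_iff algebra_simps)

lemma xstep: "x (Suc t) - x t = - \<eta> *\<^sub>R M t"
  using xdef[of t] by (simp add: Msupp)

lemma normstep: "norm (x (Suc t) - x t) = \<eta> * norm (M t)"
  using eta0 by (simp add: xstep)

lemma Gdiff: "(norm (G (Suc t) - G t))^2 \<le> \<epsilon> * mm t"
proof -
  have "norm (G (Suc t) - G t) \<le> L * \<eta> * norm (M t)"
    using lip[of "x (Suc t)" "x t"] by (simp add: G_def normstep mult.assoc)
  hence "(norm (G (Suc t) - G t))^2 \<le> (L * \<eta> * norm (M t))^2"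
    by (intro power_mono) auto
  thus ?thesis by (simp add: \<epsilon>_def mm_def power_mult_distrib)
qed

lemma step_desc: "a t + 3/4 * mm t - e t \<le> 2 * (f (x t) - f (x (Suc t))) / \<eta>"
proof -
  have ip: "G t \<bullet> M t = (a t + mm t - e t) / 2"
  proof -
    have "G t \<bullet> M t = (mask (S t) * G t) \<bullet> M t"
      using mask_inner[of "G t" "S t" "M t"] by (simp add: Msupp)
    moreover have "e t = mm t - 2 * ((mask (S t) * G t) \<bullet> M t) + a t"
      unfolding e_def E_def mm_def a_def by (simp add: power2_norm_eq_inner inner_diff inner_commute)
    ultimately show ?thesis by simp
  qed
  have "f (x (Suc t)) \<le> f (x t) - \<eta> * (G t \<bullet> M t) + L / 2 * (\<eta>^2 * mm t)"
    using desc[of t] by (simp add: xstep normstep G_def mm_def power_mult_distrib)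
  hence "f (x (Suc t)) \<le> f (x t) - \<eta> / 2 * (a t + mm t - e t) + (L * \<eta>) * \<eta> / 2 * mm t"
  proof -
    have "\<eta> * (G t \<bullet> M t) = \<eta> / 2 * (a t + mm t - e t)" by (simp add: ip)
    moreover have "L / 2 * (\<eta>^2 * mm t) = (L * \<eta>) * \<eta> / 2 * mm t" by (simp add: power2_eq_square)
    ultimately show ?thesis using \<open>f (x (Suc t)) \<le> _\<close> by linarith
  qed
  moreover have "(L * \<eta>) * \<eta> / 2 * mm t \<le> (1/4) * \<eta> / 2 * mm t"
    using eta1 eta0 by (intro mult_right_mono divide_right_mono) (auto simp: mm_def)
  ultimately have "\<eta> / 2 * (a t + 3/4 * mm t - e t) \<le> f (x t) - f (x (Suc t))"
    by (simp add: algebra_simps)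
  hence "(a t + 3/4 * mm t - e t) * \<eta> \<le> 2 * (f (x t) - f (x (Suc t)))"
    by (simp add: field_simps)
  thus ?thesis using eta0 by (simp add: pos_le_divide_eq)
qed


lemma Sper: "j < \<tau> \<Longrightarrow> S (s * \<tau> + j) = S (s * \<tau>)"
proof (induction j)
  case 0 then show ?case by simp
next
  case (Suc j)
  have "(s * \<tau> + Suc j) mod \<tau> = Suc j" using Suc.prems by simp
  hence "S (s * \<tau> + Suc j) = S (s * \<tau> + j)" using Sconst[of "s * \<tau> + Suc j"] Suc.prems by simp
  thus ?case using Suc by simp
qed

lemma norm_sq_tri: "(norm (u + v))^2 \<le> (norm u + norm (v::real^'i))^2"
  by (intro power_mono norm_triangle_ineq) auto

lemma Erec:
  assumes t: "t mod \<tau> \<noteq> 0"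
  shows "e t \<le> (1-\<beta>) * e (t-1) + \<epsilon> / \<beta> * mm (t-1)"
proof -
  obtain s where ts: "t = Suc s" using t by (cases t) auto
  have SS: "S (Suc s) = S s" using Sconst[OF t] ts by simp
  have Mt: "M (Suc s) = (1-\<beta>) *\<^sub>R M s + \<beta> *\<^sub>R (mask (S s) * G (Suc s))"
    using Mdef[of "Suc s"] SS Msupp[of s] by (simp add: G_def)
  have Et: "E (Suc s) = (1-\<beta>) *\<^sub>R (E s + mask (S s) * (G s - G (Suc s)))"
    unfolding E_def Mt SS mask_diff[symmetric] by (simp add: algebra_simps)
  define u where "u = norm (E s)"
  define v where "v = norm (G (Suc s) - G s)"
  have "norm (E (Suc s)) \<le> (1-\<beta>) * (u + v)"
  proof -
    have "norm (E (Suc s)) = (1-\<beta>) * norm (E s + mask (S s) * (G s - G (Suc s)))"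
      using b1 by (simp add: Et)
    also have "\<dots> \<le> (1-\<beta>) * (u + v)"
    proof (intro mult_left_mono)
      have "norm (mask (S s) * (G s - G (Suc s))) \<le> v"
        using norm_mask_le[of "S s" "G s - G (Suc s)"] by (simp add: v_def norm_minus_commute)
      thus "norm (E s + mask (S s) * (G s - G (Suc s))) \<le> u + v"
        unfolding u_def by (meson add_left_mono norm_triangle_ineq order_trans)
    qed (use b1 in auto)
    finally show ?thesis .
  qed
  hence "e (Suc s) \<le> ((1-\<beta>) * (u + v))^2"
    unfolding e_def by (intro power_mono) auto
  also have "\<dots> = (1-\<beta>)^2 * (u+v)^2" by (simp add: power_mult_distrib)
  also have "\<dots> \<le> (1-\<beta>) * u^2 + v^2 / \<beta>" by (rule sq_ineq[OF b0 b1])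
  also have "\<dots> \<le> (1-\<beta>) * e s + \<epsilon> / \<beta> * mm s"
  proof -
    have "v^2 \<le> \<epsilon> * mm s" unfolding v_def by (rule Gdiff)
    hence "v^2 / \<beta> \<le> \<epsilon> * mm s / \<beta>" using b0 by (intro divide_right_mono) auto
    thus ?thesis by (simp add: u_def e_def)
  qed
  finally show ?thesis using ts by simp
qed

lemma Erestart:
  assumes t: "t mod \<tau> = 0" "1 \<le> t"
  shows "e t \<le> (1-\<beta>) * (2 * e (t-1) + 2 * \<epsilon> * mm (t-1) + 2 * gg t)"
proof -
  obtain s where ts: "t = Suc s" using t by (cases t) auto
  define P where "P = mask (S (Suc s))"
  have Et: "E (Suc s) = (1-\<beta>) *\<^sub>R (P * (M s - G (Suc s)))"
    using Mdef[of "Suc s"] unfolding E_def P_def mask_diff[symmetric] by (simp add: G_def algebra_simps)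
  have ms: "M s - G (Suc s) = E s + (mask (S s) * G s - G (Suc s))" by (simp add: E_def)
  define u where "u = norm (E s)"
  define w where "w = norm (mask (S s) * G s - G (Suc s))"
  have w2: "w^2 \<le> \<epsilon> * mm s + gg (Suc s)"
  proof -
    have "w^2 \<le> (norm (G s - G (Suc s)))^2 + (norm (G (Suc s)))^2"
      unfolding w_def by (rule mask_restart)
    moreover have "(norm (G s - G (Suc s)))^2 \<le> \<epsilon> * mm s"
      using Gdiff[of s] by (simp add: norm_minus_commute)
    ultimately show ?thesis by (simp add: gg_def)
  qed
  have "norm (E (Suc s)) \<le> (1-\<beta>) * (u + w)"
  proof -
    have "norm (E (Suc s)) = (1-\<beta>) * norm (P * (M s - G (Suc s)))" using b1 by (simp add: Et)
    also have "\<dots> \<le> (1-\<beta>) * (u + w)"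
    proof (intro mult_left_mono)
      have "norm (P * (M s - G (Suc s))) \<le> norm (M s - G (Suc s))" unfolding P_def by (rule norm_mask_le)
      also have "\<dots> \<le> u + w" unfolding ms u_def w_def by (rule norm_triangle_ineq)
      finally show "norm (P * (M s - G (Suc s))) \<le> u + w" .
    qed (use b1 in auto)
    finally show ?thesis .
  qed
  hence "e (Suc s) \<le> ((1-\<beta>) * (u + w))^2"
    unfolding e_def by (intro power_mono) auto
  also have "\<dots> = (1-\<beta>)^2 * (u+w)^2" by (simp add: power_mult_distrib)
  also have "\<dots> \<le> (1-\<beta>) * (2 * u^2 + 2 * w^2)"
  proof (rule mult_mono)
    show "(1-\<beta>)^2 \<le> 1-\<beta>" using b0 b1 by (simp add: power2_eq_square mult_left_le)
    have "0 \<le> (u - w)^2" by simp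
    thus "(u+w)^2 \<le> 2 * u^2 + 2 * w^2" by (simp add: power2_eq_square algebra_simps)
  qed (use b1 in auto)
  also have "\<dots> \<le> (1-\<beta>) * (2 * e s + 2 * \<epsilon> * mm s + 2 * gg (Suc s))"
    using w2 b1 by (intro mult_left_mono) (auto simp: u_def e_def)
  finally show ?thesis using ts by simp
qed

lemma e0: "e 0 \<le> gg 0"
proof -
  have "E 0 = - ((1-\<beta>) *\<^sub>R (mask (S 0) * G 0))"
    using Mdef[of 0] by (simp add: E_def G_def algebra_simps)
  hence "e 0 = (1-\<beta>)^2 * a 0" using b1 by (simp add: e_def a_def power_mult_distrib)
  also have "\<dots> \<le> 1 * a 0"
    using b0 b1 by (intro mult_right_mono) (auto simp: a_def power_le_one)
  also have "\<dots> \<le> gg 0" unfolding a_def gg_def using norm_mask_le[of "S 0" "G 0"]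
    by (simp add: power_mono)
  finally show ?thesis .
qed

lemma nonnegs: "0 \<le> e t" "0 \<le> mm t" "0 \<le> gg t" "0 \<le> a t" "0 \<le> \<epsilon>"
  by (auto simp: e_def mm_def gg_def a_def \<epsilon>_def)


lemma sq2: "(norm (p::real^'i))^2 \<le> 2 * (norm q)^2 + 2 * (norm (p - q))^2"
proof -
  have "norm p \<le> norm q + norm (p - q)" using norm_triangle_ineq[of q "p - q"] by simp
  hence "(norm p)^2 \<le> (norm q + norm (p - q))^2" by (intro power_mono) auto
  also have "\<dots> \<le> 2 * (norm q)^2 + 2 * (norm (p - q))^2"
  proof -
    have "0 \<le> (norm q - norm (p - q))^2" by simp
    thus ?thesis by (simp add: power2_eq_square algebra_simps)
  qed
  finally show ?thesis .
qed

lemma per_err: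
  "(\<Sum>j<\<tau>. e (s*\<tau> + j)) \<le> e (s*\<tau>) / \<beta> + \<epsilon> / \<beta>^2 * (\<Sum>j<\<tau>. mm (s*\<tau> + j))"
proof -
  obtain t' where tt: "\<tau> = Suc t'" using tau0 by (cases \<tau>) auto
  define b where "b = s*\<tau>"
  define W where "W = (\<Sum>j<\<tau>. e (b + j))"
  define Mm where "Mm = (\<Sum>j<\<tau>. mm (b + j))"
  have stepj: "e (b + Suc j) \<le> (1-\<beta>) * e (b + j) + \<epsilon> / \<beta> * mm (b + j)" if "j < t'" for j
  proof -
    have "Suc j < \<tau>" using that tt by simp
    hence "(s*\<tau> + Suc j) mod \<tau> \<noteq> 0" by simp
    from Erec[OF this] show ?thesis by (simp add: b_def)
  qed
  have "W = e (b + 0) + (\<Sum>j<t'. e (b + Suc j))"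
    unfolding W_def tt by (rule sum.lessThan_Suc_shift)
  also have "(\<Sum>j<t'. e (b + Suc j)) \<le> (\<Sum>j<t'. (1-\<beta>) * e (b + j) + \<epsilon> / \<beta> * mm (b + j))"
    by (rule sum_mono) (rule stepj, simp)
  also have "\<dots> = (1-\<beta>) * (\<Sum>j<t'. e (b + j)) + \<epsilon> / \<beta> * (\<Sum>j<t'. mm (b + j))"
    by (simp add: sum.distrib sum_distrib_left)
  also have "\<dots> \<le> (1-\<beta>) * W + \<epsilon> / \<beta> * Mm"
  proof (intro add_mono mult_left_mono)
    show "(\<Sum>j<t'. e (b + j)) \<le> W" unfolding W_def tt by (simp add: nonnegs)
    show "(\<Sum>j<t'. mm (b + j)) \<le> Mm" unfolding Mm_def tt by (simp add: nonnegs)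
  qed (use b0 b1 nonnegs in auto)
  finally have "\<beta> * W \<le> e b + \<epsilon> / \<beta> * Mm" by (simp add: algebra_simps)
  hence "W \<le> (e b + \<epsilon> / \<beta> * Mm) / \<beta>" using b0 by (simp add: pos_le_divide_eq mult.commute)
  also have "\<dots> = e b / \<beta> + \<epsilon> / \<beta>^2 * Mm" using b0 by (simp add: power2_eq_square field_simps)
  finally show ?thesis unfolding W_def Mm_def b_def .
qed

lemma per_end:
  "j < \<tau> \<Longrightarrow> e (s*\<tau> + j) \<le> (1-\<beta>)^j * e (s*\<tau>) + \<epsilon> / \<beta> * (\<Sum>i<j. mm (s*\<tau> + i))"
proof (induction j)
  case 0 then show ?case by simp
next
  case (Suc j)
  have "(s*\<tau> + Suc j) mod \<tau> \<noteq> 0" using Suc.prems by simp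
  from Erec[OF this] have "e (s*\<tau> + Suc j) \<le> (1-\<beta>) * e (s*\<tau> + j) + \<epsilon> / \<beta> * mm (s*\<tau> + j)" by simp
  also have "\<dots> \<le> (1-\<beta>) * ((1-\<beta>)^j * e (s*\<tau>) + \<epsilon> / \<beta> * (\<Sum>i<j. mm (s*\<tau> + i))) + \<epsilon> / \<beta> * mm (s*\<tau> + j)"
    using Suc b0 b1 nonnegs by (intro add_mono mult_left_mono) auto
  also have "\<dots> \<le> (1-\<beta>)^Suc j * e (s*\<tau>) + \<epsilon> / \<beta> * (\<Sum>i<Suc j. mm (s*\<tau> + i))"
  proof -
    have nn: "0 \<le> \<epsilon> / \<beta> * (\<Sum>i<j. mm (s*\<tau> + i))"
      using b0 nonnegs by (intro mult_nonneg_nonneg divide_nonneg_pos sum_nonneg) auto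
    have "(1-\<beta>) * (\<epsilon> / \<beta> * (\<Sum>i<j. mm (s*\<tau> + i))) \<le> 1 * (\<epsilon> / \<beta> * (\<Sum>i<j. mm (s*\<tau> + i)))"
      using b0 nn by (intro mult_right_mono) auto
    thus ?thesis by (simp add: algebra_simps)
  qed
  finally show ?case .
qed

lemma drift:
  assumes j: "j < \<tau>"
  shows "(norm (G (s*\<tau> + j) - G (s*\<tau>)))^2 \<le> \<epsilon> * real \<tau> * (\<Sum>i<\<tau>. mm (s*\<tau> + i))"
proof -
  have xd: "x (s*\<tau> + j) - x (s*\<tau>) = (\<Sum>i<j. x (s*\<tau> + Suc i) - x (s*\<tau> + i))"
    by (subst sum_lessThan_telescope) simp
  have "norm (x (s*\<tau> + j) - x (s*\<tau>)) \<le> (\<Sum>i<j. norm (x (s*\<tau> + Suc i) - x (s*\<tau> + i)))"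
    unfolding xd by (rule norm_sum)
  also have "\<dots> = \<eta> * (\<Sum>i<j. norm (M (s*\<tau> + i)))"
    by (simp add: normstep sum_distrib_left)
  finally have nx: "norm (x (s*\<tau> + j) - x (s*\<tau>)) \<le> \<eta> * (\<Sum>i<j. norm (M (s*\<tau> + i)))" .
  have "norm (G (s*\<tau> + j) - G (s*\<tau>)) \<le> L * \<eta> * (\<Sum>i<j. norm (M (s*\<tau> + i)))"
    using lip[of "x (s*\<tau> + j)" "x (s*\<tau>)"] nx Lpos unfolding G_def
    by (smt (verit, best) mult.assoc mult_left_mono)
  hence "(norm (G (s*\<tau> + j) - G (s*\<tau>)))^2 \<le> (L * \<eta> * (\<Sum>i<j. norm (M (s*\<tau> + i))))^2"
    by (intro power_mono) auto
  also have "\<dots> = \<epsilon> * (\<Sum>i<j. norm (M (s*\<tau> + i)))^2" by (simp add: \<epsilon>_def power_mult_distrib)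
  also have "\<dots> \<le> \<epsilon> * (real j * (\<Sum>i<j. (norm (M (s*\<tau> + i)))^2))"
    by (intro mult_left_mono sum_sq_le) (simp add: \<epsilon>_def)
  also have "\<dots> \<le> \<epsilon> * (real \<tau> * (\<Sum>i<\<tau>. mm (s*\<tau> + i)))"
  proof (intro mult_left_mono mult_mono)
    show "(\<Sum>i<j. (norm (M (s*\<tau> + i)))^2) \<le> (\<Sum>i<\<tau>. mm (s*\<tau> + i))"
      unfolding mm_def using j by (intro sum_mono2) auto
  qed (use j in \<open>auto simp: \<epsilon>_def mm_def intro!: sum_nonneg\<close>)
  finally show ?thesis by (simp add: mult.assoc)
qed

lemma per_g:
  shows "real \<tau> * \<delta> * gg (s*\<tau>) \<le> 2 * (\<Sum>j<\<tau>. a (s*\<tau> + j)) + 2 * \<epsilon> * (real \<tau>)^2 * (\<Sum>j<\<tau>. mm (s*\<tau> + j))"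
    and "(\<Sum>j<\<tau>. gg (s*\<tau> + j)) \<le> (4 * (\<Sum>j<\<tau>. a (s*\<tau> + j)) + 6 * \<epsilon> * (real \<tau>)^2 * (\<Sum>j<\<tau>. mm (s*\<tau> + j))) / \<delta>"
proof -
  define b where "b = s*\<tau>"
  define Mm where "Mm = (\<Sum>j<\<tau>. mm (b + j))"
  define A where "A = (\<Sum>j<\<tau>. a (b + j))"
  have D: "(norm (G (b + j) - G b))^2 \<le> \<epsilon> * real \<tau> * Mm" if "j < \<tau>" for j
    unfolding b_def Mm_def by (rule drift[OF that])
  have one: "\<delta> * gg b \<le> 2 * a (b + j) + 2 * (\<epsilon> * real \<tau> * Mm)" if j: "j < \<tau>" for j
  proof -
    have "\<delta> * gg b \<le> (norm (mask (S b) * G b))^2"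
      using topk[of b] unfolding gg_def G_def b_def by simp
    also have "\<dots> \<le> 2 * (norm (mask (S b) * G (b+j)))^2 + 2 * (norm (mask (S b) * G b - mask (S b) * G (b+j)))^2"
      by (rule sq2)
    also have "(norm (mask (S b) * G (b+j)))^2 = a (b + j)"
      unfolding a_def b_def using Sper[OF j] by simp
    also have "(norm (mask (S b) * G b - mask (S b) * G (b+j)))^2 \<le> (norm (G (b + j) - G b))^2"
      unfolding mask_diff by (metis norm_mask_le norm_minus_commute norm_ge_zero power_mono)
    finally show ?thesis using D[OF j] by linarith
  qed
  have "(\<Sum>j<\<tau>. \<delta> * gg b) \<le> (\<Sum>j<\<tau>. 2 * a (b + j) + 2 * (\<epsilon> * real \<tau> * Mm))"
    by (rule sum_mono) (rule one, simp)
  hence first: "real \<tau> * \<delta> * gg b \<le> 2 * A + 2 * \<epsilon> * (real \<tau>)^2 * Mm"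
    by (simp add: A_def sum.distrib sum_distrib_left power2_eq_square algebra_simps)
  thus "real \<tau> * \<delta> * gg (s*\<tau>) \<le> 2 * (\<Sum>j<\<tau>. a (s*\<tau> + j)) + 2 * \<epsilon> * (real \<tau>)^2 * (\<Sum>j<\<tau>. mm (s*\<tau> + j))"
    unfolding b_def A_def Mm_def .
  have two: "gg (b + j) \<le> 2 * gg b + 2 * (\<epsilon> * real \<tau> * Mm)" if j: "j < \<tau>" for j
    using sq2[of "G (b+j)" "G b"] D[OF j] unfolding gg_def by linarith
  have "(\<Sum>j<\<tau>. gg (b + j)) \<le> (\<Sum>j<\<tau>. 2 * gg b + 2 * (\<epsilon> * real \<tau> * Mm))"
    by (rule sum_mono) (rule two, simp)
  also have "\<dots> = 2 * (real \<tau> * gg b) + 2 * \<epsilon> * (real \<tau>)^2 * Mm"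
    by (simp add: power2_eq_square algebra_simps)
  also have "\<dots> \<le> 2 * ((2 * A + 2 * \<epsilon> * (real \<tau>)^2 * Mm) / \<delta>) + 2 * \<epsilon> * (real \<tau>)^2 * Mm / \<delta>"
  proof (intro add_mono mult_left_mono)
    show "real \<tau> * gg b \<le> (2 * A + 2 * \<epsilon> * (real \<tau>)^2 * Mm) / \<delta>"
      using first d0 by (simp add: pos_le_divide_eq algebra_simps)
    have "0 \<le> 2 * \<epsilon> * (real \<tau>)^2 * Mm" unfolding Mm_def by (simp add: nonnegs sum_nonneg)
    thus "2 * \<epsilon> * (real \<tau>)^2 * Mm \<le> 2 * \<epsilon> * (real \<tau>)^2 * Mm / \<delta>"
      using d0 d1 by (simp add: le_divide_eq mult_left_le)
  qed simp
  also have "\<dots> = (4 * A + 6 * \<epsilon> * (real \<tau>)^2 * Mm) / \<delta>" using d0 by (simp add: field_simps)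
  finally show "(\<Sum>j<\<tau>. gg (s*\<tau> + j)) \<le> (4 * (\<Sum>j<\<tau>. a (s*\<tau> + j)) + 6 * \<epsilon> * (real \<tau>)^2 * (\<Sum>j<\<tau>. mm (s*\<tau> + j))) / \<delta>"
    unfolding b_def A_def Mm_def .
qed

end

lemma regroup: "(\<Sum>t<K*\<tau>. h t) = (\<Sum>s<K. \<Sum>j<\<tau>. h (s*\<tau> + j))" for h :: "nat \<Rightarrow> real"
proof -
  have "(\<Sum>t<K*\<tau>. h t) = (\<Sum>s<K. sum h {s*\<tau>..<s*\<tau>+\<tau>})"
    by (rule sum.nat_group[symmetric])
  also have "\<dots> = (\<Sum>s<K. \<Sum>j<\<tau>. h (s*\<tau> + j))"
  proof (rule sum.cong[OF refl])
    fix s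
    have "sum h {0 + s*\<tau>..<\<tau> + s*\<tau>} = sum (h \<circ> plus (s*\<tau>)) {0..<\<tau>}"
      by (rule sum.atLeastLessThan_shift_bounds)
    thus "sum h {s*\<tau>..<s*\<tau>+\<tau>} = (\<Sum>j<\<tau>. h (s*\<tau> + j))"
      by (simp add: add.commute atLeast0LessThan)
  qed
  finally show ?thesis .
qed

context run begin

lemma tb7: "7 \<le> real \<tau> * \<beta>"
proof -
  have "real \<tau> * \<beta> * \<delta> \<le> real \<tau> * \<beta> * 1" using d1 b0 by (intro mult_left_mono) auto
  thus ?thesis using c1 by simp
qed

lemma restart_rec:
  "e (Suc s * \<tau>) \<le> 1/4 * e (s*\<tau>) + 4 * \<epsilon> / \<beta> * (\<Sum>j<\<tau>. mm (s*\<tau> + j)) + 2 * gg (Suc s * \<tau>)"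
proof -
  define Mm where "Mm = (\<Sum>j<\<tau>. mm (s*\<tau> + j))"
  define t where "t = Suc s * \<tau>"
  have t1: "t - 1 = s*\<tau> + (\<tau> - 1)" using tau0 by (simp add: t_def)
  have R: "e t \<le> (1-\<beta>) * (2 * e (t-1) + 2 * \<epsilon> * mm (t-1) + 2 * gg t)"
    by (rule Erestart) (use tau0 in \<open>auto simp: t_def\<close>)
  have pe: "e (t-1) \<le> (1-\<beta>)^(\<tau>-1) * e (s*\<tau>) + \<epsilon> / \<beta> * Mm"
  proof -
    have "e (t-1) \<le> (1-\<beta>)^(\<tau>-1) * e (s*\<tau>) + \<epsilon> / \<beta> * (\<Sum>i<\<tau>-1. mm (s*\<tau> + i))"
      unfolding t1 by (rule per_end) (use tau0 in auto)
    also have "(\<Sum>i<\<tau>-1. mm (s*\<tau> + i)) \<le> Mm"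
      unfolding Mm_def by (intro sum_mono2) (auto simp: nonnegs)
    hence "\<epsilon> / \<beta> * (\<Sum>i<\<tau>-1. mm (s*\<tau> + i)) \<le> \<epsilon> / \<beta> * Mm"
      using b0 nonnegs by (intro mult_left_mono) auto
    finally show ?thesis by simp
  qed
  have pm: "mm (t-1) \<le> Mm"
    unfolding t1 Mm_def by (rule member_le_sum) (use tau0 nonnegs in auto)
  have pw: "(1-\<beta>) * (1-\<beta>)^(\<tau>-1) = (1-\<beta>)^\<tau>" using tau0 by (cases \<tau>) auto
  have p8: "(1-\<beta>)^\<tau> \<le> 1/8" by (rule pow_small[OF b0 b1 tb7])
  have ob: "0 \<le> 1-\<beta>" "1-\<beta> \<le> 1" using b0 b1 by auto
  have epsb: "\<epsilon> \<le> \<epsilon> / \<beta>" using b0 b1 nonnegs by (simp add: le_divide_eq mult_left_le)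
  have Mm0: "0 \<le> Mm" unfolding Mm_def by (simp add: sum_nonneg nonnegs)
  have "e t \<le> (1-\<beta>) * (2 * ((1-\<beta>)^(\<tau>-1) * e (s*\<tau>) + \<epsilon> / \<beta> * Mm) + 2 * \<epsilon> * Mm + 2 * gg t)"
    using R pe pm ob nonnegs
    by (smt (verit, best) mult_left_mono)
  also have "\<dots> = 2 * ((1-\<beta>)^\<tau> * e (s*\<tau>)) + (1-\<beta>) * (2 * (\<epsilon> / \<beta> * Mm) + 2 * (\<epsilon> * Mm) + 2 * gg t)"
    by (simp add: pw[symmetric] algebra_simps)
  also have "\<dots> \<le> 2 * (1/8 * e (s*\<tau>)) + 1 * (2 * (\<epsilon> / \<beta> * Mm) + 2 * (\<epsilon> / \<beta> * Mm) + 2 * gg t)"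
  proof -
    have A: "2 * ((1-\<beta>)^\<tau> * e (s*\<tau>)) \<le> 2 * (1/8 * e (s*\<tau>))"
      using p8 nonnegs by (intro mult_left_mono mult_right_mono) auto
    define Q where "Q = 2 * (\<epsilon> / \<beta> * Mm) + 2 * (\<epsilon> * Mm) + 2 * gg t"
    have Q0: "0 \<le> Q" unfolding Q_def using Mm0 nonnegs b0
      by (intro add_nonneg_nonneg mult_nonneg_nonneg divide_nonneg_pos) auto
    have "\<epsilon> * Mm \<le> \<epsilon> / \<beta> * Mm" using epsb Mm0 by (rule mult_right_mono)
    hence "Q \<le> 2 * (\<epsilon> / \<beta> * Mm) + 2 * (\<epsilon> / \<beta> * Mm) + 2 * gg t" unfolding Q_def by linarith
    moreover have "(1-\<beta>) * Q \<le> Q" using Q0 ob by (simp add: mult_left_le_one_le)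
    ultimately show ?thesis using A unfolding Q_def by simp
  qed
  finally show ?thesis unfolding Mm_def t_def by (simp add: algebra_simps)
qed


lemma main: "(\<Sum>t<K*\<tau>. gg t) \<le> 32/3 * (f (x 0) - f (x (K*\<tau>))) / (\<delta> * \<eta>)"
proof -
  define A where "A s = (\<Sum>j<\<tau>. a (s*\<tau> + j))" for s
  define Mm where "Mm s = (\<Sum>j<\<tau>. mm (s*\<tau> + j))" for s
  define Ee where "Ee s = (\<Sum>j<\<tau>. e (s*\<tau> + j))" for s
  define Gs where "Gs s = (\<Sum>j<\<tau>. gg (s*\<tau> + j))" for s
  define X where "X s = e (s*\<tau>)" for s
  define g0 where "g0 s = gg (s*\<tau>)" for s
  define u where "u = (\<Sum>s<K. A s)"
  define v where "v = (\<Sum>s<K. Mm s)"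
  define w where "w = (\<Sum>s<K. Ee s)"
  define Xs where "Xs = (\<Sum>s<K. X s)"
  define z where "z = (\<Sum>s<K. g0 s)"
  define F where "F = f (x 0) - f (x (K*\<tau>))"
  have Mm0: "0 \<le> Mm s" for s unfolding Mm_def by (simp add: sum_nonneg nonnegs)
  have X0: "0 \<le> X s" for s unfolding X_def by (simp add: nonnegs)
  have v0: "0 \<le> v" unfolding v_def by (simp add: sum_nonneg Mm0)
  have z0: "0 \<le> z" unfolding z_def g0_def by (simp add: sum_nonneg nonnegs)
  have u0: "0 \<le> u" unfolding u_def A_def by (simp add: sum_nonneg nonnegs)
  have h1: "u + 3/4 * v - w \<le> 2 * F / \<eta>"
  proof -
    have "(\<Sum>t<K*\<tau>. a t + 3/4 * mm t - e t) \<le> (\<Sum>t<K*\<tau>. 2 * (f (x t) - f (x (Suc t))) / \<eta>)"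
      by (rule sum_mono) (rule step_desc)
    also have "\<dots> = 2 * (\<Sum>t<K*\<tau>. f (x t) - f (x (Suc t))) / \<eta>"
      by (simp add: sum_divide_distrib sum_distrib_left)
    also have "(\<Sum>t<K*\<tau>. f (x t) - f (x (Suc t))) = F"
      unfolding F_def by (rule sum_lessThan_telescope')
    also have "(\<Sum>t<K*\<tau>. a t + 3/4 * mm t - e t) = u + 3/4 * v - w"
      unfolding u_def v_def w_def A_def Mm_def Ee_def regroup
      by (simp add: sum.distrib sum_subtractf sum_distrib_left)
    finally show ?thesis .
  qed
  have h2: "w \<le> Xs / \<beta> + \<epsilon> / \<beta>^2 * v"
  proof -
    have "w \<le> (\<Sum>s<K. X s / \<beta> + \<epsilon> / \<beta>^2 * Mm s)"
      unfolding w_def Ee_def X_def Mm_def by (rule sum_mono) (rule per_err)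
    also have "\<dots> = Xs / \<beta> + \<epsilon> / \<beta>^2 * v"
      unfolding Xs_def v_def by (simp add: sum.distrib sum_divide_distrib sum_distrib_left)
    finally show ?thesis .
  qed
  have h3: "Xs \<le> 4/3 * (2 * z + 4 * \<epsilon> / \<beta> * v)"
  proof (cases K)
    case 0 thus ?thesis by (simp add: Xs_def z_def v_def)
  next
    case (Suc K')
    have rr: "X (Suc s) \<le> 1/4 * X s + 4 * \<epsilon> / \<beta> * Mm s + 2 * g0 (Suc s)" for s
      unfolding X_def Mm_def g0_def by (rule restart_rec)
    have "Xs = X 0 + (\<Sum>s<K'. X (Suc s))" unfolding Xs_def Suc by (rule sum.lessThan_Suc_shift)
    also have "(\<Sum>s<K'. X (Suc s)) \<le> (\<Sum>s<K'. 1/4 * X s + 4 * \<epsilon> / \<beta> * Mm s + 2 * g0 (Suc s))"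
      by (rule sum_mono) (rule rr)
    also have "\<dots> = 1/4 * (\<Sum>s<K'. X s) + 4 * \<epsilon> / \<beta> * (\<Sum>s<K'. Mm s) + 2 * (\<Sum>s<K'. g0 (Suc s))"
      by (simp add: sum.distrib sum_distrib_left)
    finally have i1: "Xs \<le> X 0 + (1/4 * (\<Sum>s<K'. X s) + 4 * \<epsilon> / \<beta> * (\<Sum>s<K'. Mm s) + 2 * (\<Sum>s<K'. g0 (Suc s)))"
      by simp
    have i2: "(\<Sum>s<K'. X s) \<le> Xs" unfolding Xs_def Suc by (simp add: X0)
    have i3: "(\<Sum>s<K'. Mm s) \<le> v" unfolding v_def Suc by (simp add: Mm0)
    have i3': "4 * \<epsilon> / \<beta> * (\<Sum>s<K'. Mm s) \<le> 4 * \<epsilon> / \<beta> * v"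
      using i3 b0 nonnegs by (intro mult_left_mono) auto
    have i4: "z = g0 0 + (\<Sum>s<K'. g0 (Suc s))" unfolding z_def Suc by (rule sum.lessThan_Suc_shift)
    have i5: "X 0 \<le> g0 0" unfolding X_def g0_def using e0 by simp
    have i6: "0 \<le> g0 0" unfolding g0_def by (simp add: nonnegs)
    have "3/4 * Xs \<le> 2 * z + 4 * \<epsilon> / \<beta> * v" using i1 i2 i3' i4 i5 i6 by linarith
    thus ?thesis by simp
  qed
  have h4: "real \<tau> * \<delta> * z \<le> 2 * u + 2 * \<epsilon> * (real \<tau>)^2 * v"
  proof -
    have "real \<tau> * \<delta> * z = (\<Sum>s<K. real \<tau> * \<delta> * g0 s)" unfolding z_def by (simp add: sum_distrib_left)
    also have "\<dots> \<le> (\<Sum>s<K. 2 * A s + 2 * \<epsilon> * (real \<tau>)^2 * Mm s)"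
      unfolding g0_def A_def Mm_def by (rule sum_mono) (rule per_g(1))
    also have "\<dots> = 2 * u + 2 * \<epsilon> * (real \<tau>)^2 * v"
      unfolding u_def v_def by (simp add: sum.distrib sum_distrib_left)
    finally show ?thesis .
  qed
  have h5: "(\<Sum>t<K*\<tau>. gg t) \<le> (4 * u + 6 * (\<epsilon> * (real \<tau>)^2) * v) / \<delta>"
  proof -
    have "(\<Sum>t<K*\<tau>. gg t) = (\<Sum>s<K. Gs s)" unfolding Gs_def by (rule regroup)
    also have "\<dots> \<le> (\<Sum>s<K. (4 * A s + 6 * \<epsilon> * (real \<tau>)^2 * Mm s) / \<delta>)"
      unfolding Gs_def A_def Mm_def by (rule sum_mono) (rule per_g(2))
    also have "\<dots> = (4 * u + 6 * (\<epsilon> * (real \<tau>)^2) * v) / \<delta>"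
      unfolding u_def v_def sum_divide_distrib[symmetric] by (simp add: sum.distrib sum_distrib_left mult.assoc)
    finally show ?thesis .
  qed
  define p where "p = \<epsilon> / \<beta>^2"
  define q where "q = \<epsilon> * (real \<tau>)^2"
  have p1: "p \<le> 3/80"
  proof -
    have "\<epsilon> \<le> 3 * \<delta> * \<beta>^2 / 80" using c2 by (simp add: \<epsilon>_def)
    also have "\<dots> \<le> 3 * 1 * \<beta>^2 / 80" using d1 by (intro divide_right_mono mult_right_mono) auto
    finally have "\<epsilon> \<le> 3/80 * \<beta>^2" by simp
    thus ?thesis unfolding p_def using b0 by (simp add: pos_divide_le_eq)
  qed
  have q1: "q \<le> 3/80"
  proof -
    have "q \<le> 3 * \<delta> / 80" using c3 by (simp add: q_def \<epsilon>_def)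
    thus ?thesis using d1 by simp
  qed
  have pv: "p * v \<le> 3/80 * v" using p1 v0 by (rule mult_right_mono)
  have qv: "q * v \<le> 3/80 * v" using q1 v0 by (rule mult_right_mono)
  have qv0: "0 \<le> q * v" unfolding q_def using v0 nonnegs by simp
  have zb: "64/3 * (z / \<beta>) \<le> 2 * u + 2 * (q * v)"
  proof -
    have "64/3 * (z / \<beta>) \<le> (real \<tau> * \<beta> * \<delta>) * (z / \<beta>)"
      using c1 z0 b0 by (intro mult_right_mono) auto
    also have "\<dots> = real \<tau> * \<delta> * z" using b0 by simp
    also have "\<dots> \<le> 2 * u + 2 * (q * v)" using h4 by (simp add: q_def mult.assoc)
    finally show ?thesis .
  qed
  have xb: "Xs / \<beta> \<le> 8/3 * (z / \<beta>) + 16/3 * (p * v)"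
  proof -
    have "Xs / \<beta> \<le> (4/3 * (2 * z + 4 * \<epsilon> / \<beta> * v)) / \<beta>" using h3 b0 by (intro divide_right_mono) auto
    also have "\<dots> = 8/3 * (z / \<beta>) + 16/3 * (p * v)" using b0 by (simp add: p_def power2_eq_square field_simps)
    finally show ?thesis .
  qed
  have wb: "w \<le> Xs / \<beta> + p * v" using h2 by (simp add: p_def)
  have L: "4 * u + 6 * QV \<le> 32/3 * FE"
    if "u + 3/4 * v - W \<le> 2 * FE" "W \<le> XB + PV" "XB \<le> 8/3 * ZB + 16/3 * PV"
       "64/3 * ZB \<le> 2 * u + 2 * QV" "PV \<le> 3/80 * v" "QV \<le> 3/80 * v" "0 \<le> QV" "0 \<le> u" "0 \<le> v"
    for u v W FE XB PV ZB QV :: real using that by linarith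
  have h1': "u + 3/4 * v - w \<le> 2 * (F / \<eta>)" using h1 by simp
  have lin: "4 * u + 6 * (q * v) \<le> 32/3 * (F / \<eta>)"
    by (rule L[OF h1' wb xb zb pv qv qv0 u0 v0])
  have "(\<Sum>t<K*\<tau>. gg t) \<le> (4 * u + 6 * (q * v)) / \<delta>" using h5 by (simp add: q_def mult.assoc)
  also have "\<dots> \<le> (32/3 * (F / \<eta>)) / \<delta>" using lin d0 by (intro divide_right_mono) auto
  also have "\<dots> = 32/3 * F / (\<delta> * \<eta>)" by simp
  finally show ?thesis unfolding F_def .
qed


lemma main': "(\<Sum>t<K*\<tau>. (norm (g (x t)))^2) \<le> 32/3 * (f (x 0) - f (x (K*\<tau>))) / (\<delta> * \<eta>)"
  using main[of K] by (simp add: gg_def G_def)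

end

lemma sq_from_sqrt: "0 \<le> (\<eta>::real) \<Longrightarrow> \<eta> \<le> sqrt y \<Longrightarrow> \<eta>^2 \<le> y"
proof -
  assume a: "0 \<le> \<eta>" "\<eta> \<le> sqrt y"
  hence y: "0 \<le> y" using real_sqrt_ge_0_iff[of y] by linarith
  have "\<eta>^2 \<le> (sqrt y)^2" using a by (intro power_mono) auto
  thus ?thesis using y by simp
qed

lemma delta_props:
  fixes coord :: "'i::finite \<Rightarrow> nat \<times> nat \<times> nat"
  assumes coord: "bij_betw coord UNIV (layer_dom NL m n)"
    and kpos: "\<And>l. l < NL \<Longrightarrow> 0 < k l"
    and klt: "\<And>l. l < NL \<Longrightarrow> k l < m l * n l"
  shows "0 < delta_min NL m n k" "delta_min NL m n k \<le> 1"
proof -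
  have NL: "0 < NL" using coord_fst[OF coord, of undefined] by simp
  have "delta_min NL m n k \<in> (\<lambda>l. real (k l) / real (m l * n l)) ` {..<NL}"
    unfolding delta_min_def using NL by (intro Min_in) auto
  then obtain l where l: "l < NL" "delta_min NL m n k = real (k l) / real (m l * n l)" by auto
  have k1: "0 < real (k l)" using kpos[OF l(1)] by simp
  have k2: "real (k l) < real (m l * n l)" using klt[OF l(1)] by linarith
  show "0 < delta_min NL m n k" using k1 k2 l(2) by simp
  show "delta_min NL m n k \<le> 1" using k1 k2 l(2) by simp
qed

lemma part1:
  fixes f :: "real ^ 'i::finite \<Rightarrow> real" and g :: "real ^ 'i \<Rightarrow> real ^ 'i"
    and coord :: "'i \<Rightarrow> nat \<times> nat \<times> nat"
    and NL :: nat and m n k :: "nat \<Rightarrow> nat" and L :: real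
  assumes coord: "bij_betw coord UNIV (layer_dom NL m n)"
    and grad: "\<And>x. (f has_derivative (\<lambda>h. g x \<bullet> h)) (at x)"
    and A1: "bdd_below (range f)"
    and A2: "\<And>x y. norm (g x - g y) \<le> L * norm (x - y)"
    and Lpos: "L > 0"
    and kpos: "\<And>l. l < NL \<Longrightarrow> 0 < k l"
    and klt: "\<And>l. l < NL \<Longrightarrow> k l < m l * n l"
    and pb: "0 < \<beta>1" "\<beta>1 \<le> 1"
    and ptau: "real \<tau> \<ge> 64 / (3 * \<beta>1 * delta_min NL m n k)"
    and peta: "0 < \<eta>"
      "\<eta> \<le> min (min (1 / (4 * L)) (sqrt (3 * delta_min NL m n k * \<beta>1^2 / (80 * L^2))))
               (min (sqrt (3 * delta_min NL m n k / (80 * (real \<tau>)^2 * L^2)))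
                    (sqrt (3 * \<beta>1 / (16 * real \<tau> * L^2))))"
    and run: "gasare_msgd coord NL k \<tau> \<beta>1 \<eta> g x M S"
  shows "(\<Sum>t<K * \<tau>. (norm (g (x t)))^2) \<le> 16 * (f (x 0) - Inf (range f)) / (delta_min NL m n k * \<eta>)"
proof -
  define \<delta> where "\<delta> = delta_min NL m n k"
  have d0: "0 < \<delta>" and d1: "\<delta> \<le> 1" unfolding \<delta>_def using delta_props[OF coord kpos klt] by auto
  have e1: "\<eta> \<le> 1 / (4 * L)" and e2: "\<eta> \<le> sqrt (3 * \<delta> * \<beta>1^2 / (80 * L^2))"
    and e3: "\<eta> \<le> sqrt (3 * \<delta> / (80 * (real \<tau>)^2 * L^2))"
    using peta(2) unfolding \<delta>_def by auto
  have c1: "64/3 \<le> real \<tau> * \<beta>1 * \<delta>"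
  proof -
    have "64 / (3 * \<beta>1 * \<delta>) \<le> real \<tau>" using ptau unfolding \<delta>_def .
    hence "64 \<le> real \<tau> * (3 * \<beta>1 * \<delta>)" using pb d0 by (simp add: divide_le_eq mult.commute)
    thus ?thesis by simp
  qed
  have tau0: "0 < \<tau>"
  proof (rule ccontr)
    assume "\<not> 0 < \<tau>" hence "\<tau> = 0" by simp
    thus False using c1 by simp
  qed
  have L2: "0 < L^2" using Lpos by simp
  have R: "run f g L \<beta>1 \<eta> \<delta> \<tau> x M S"
  proof (unfold_locales)
    fix t
    show "f (x (Suc t)) \<le> f (x t) + g (x t) \<bullet> (x (Suc t) - x t) + L / 2 * (norm (x (Suc t) - x t))^2"
      by (rule descent[OF grad A2])
    show "M t = (1-\<beta>1) *\<^sub>R (mask (S t) * (if t = 0 then 0 else M (t-1))) + \<beta>1 *\<^sub>R (mask (S t) * g (x t))"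
      using run unfolding gasare_msgd_def by blast
    show "x (Suc t) = x t - \<eta> *\<^sub>R (mask (S t) * M t)"
      using run unfolding gasare_msgd_def by blast
    show "t mod \<tau> \<noteq> 0 \<Longrightarrow> S t = S (t-1)"
      using run unfolding gasare_msgd_def by (metis (full_types))
    assume "t mod \<tau> = 0"
    hence "is_topk_mask coord NL k (g (x t)) (S t)"
      using run unfolding gasare_msgd_def by (metis (full_types))
    thus "\<delta> * (norm (g (x t)))^2 \<le> (norm (mask (S t) * g (x t)))^2"
      using topk_bound[OF coord klt] unfolding \<delta>_def by blast
  next
    fix a b show "norm (g a - g b) \<le> L * norm (a - b)" by (rule A2)
  next
    show "L * \<eta> \<le> 1/4" using e1 Lpos by (simp add: le_divide_eq ac_simps)
  next
    have "\<eta>^2 \<le> 3 * \<delta> * \<beta>1^2 / (80 * L^2)" using peta(1) e2 by (intro sq_from_sqrt) auto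
    hence "\<eta>^2 * L^2 \<le> 3 * \<delta> * \<beta>1^2 / 80" using L2 by (simp add: le_divide_eq)
    thus "(L * \<eta>)^2 \<le> 3 * \<delta> * \<beta>1^2 / 80" by (simp add: power_mult_distrib mult.commute)
  next
    have t2: "0 < (real \<tau>)^2" using tau0 by simp
    have "\<eta>^2 \<le> 3 * \<delta> / (80 * (real \<tau>)^2 * L^2)" using peta(1) e3 by (intro sq_from_sqrt) auto
    hence "\<eta>^2 * ((real \<tau>)^2 * L^2) \<le> 3 * \<delta> / 80" using L2 t2 by (simp add: le_divide_eq mult.assoc)
    thus "(L * \<eta>)^2 * (real \<tau>)^2 \<le> 3 * \<delta> / 80" by (simp add: power_mult_distrib ac_simps)
  qed (use Lpos pb tau0 d0 d1 peta(1) c1 in auto)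
  have m: "(\<Sum>t<K*\<tau>. (norm (g (x t)))^2) \<le> 32/3 * (f (x 0) - f (x (K*\<tau>))) / (\<delta> * \<eta>)"
    by (rule run.main'[OF R])
  have "Inf (range f) \<le> f (x (K*\<tau>))" using A1 by (intro cInf_lower) auto
  moreover have "Inf (range f) \<le> f (x 0)" using A1 by (intro cInf_lower) auto
  ultimately have "32/3 * (f (x 0) - f (x (K*\<tau>))) \<le> 16 * (f (x 0) - Inf (range f))" unfolding right_diff_distrib by linarith
  hence "32/3 * (f (x 0) - f (x (K*\<tau>))) / (\<delta> * \<eta>) \<le> 16 * (f (x 0) - Inf (range f)) / (\<delta> * \<eta>)"
    using d0 peta(1) by (intro divide_right_mono) auto
  with m have "(\<Sum>t<K*\<tau>. (norm (g (x t)))^2) \<le> 16 * (f (x 0) - Inf (range f)) / (\<delta> * \<eta>)"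
    by (rule order_trans)
  thus ?thesis unfolding \<delta>_def .
qed


lemma sqrt_le_div:
  fixes A C P :: real
  assumes "0 < P" "0 \<le> C" "0 \<le> A" "A * P^2 \<le> C^2"
  shows "sqrt A \<le> C / P"
proof -
  have "sqrt A * P = sqrt (A * P^2)" using assms by (simp add: real_sqrt_mult)
  also have "\<dots> \<le> sqrt (C^2)" using assms(4) by (rule real_sqrt_le_mono)
  also have "\<dots> = C" using assms by simp
  finally show ?thesis using assms by (simp add: pos_le_divide_eq)
qed

lemma tau_props:
  fixes \<delta> :: real
  assumes "0 < \<delta>" "\<delta> \<le> 1" "\<tau> = nat \<lceil>64 / (3 * \<delta>)\<rceil>"
  shows "64 / (3 * \<delta>) \<le> real \<tau>" "real \<tau> * \<delta> \<le> 67/3"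
proof -
  have y0: "0 < 64 / (3 * \<delta>)" using assms by simp
  have rt: "real \<tau> = of_int \<lceil>64 / (3 * \<delta>)\<rceil>" using assms y0 by simp
  show "64 / (3 * \<delta>) \<le> real \<tau>" unfolding rt by (rule le_of_int_ceiling)
  have "real \<tau> \<le> 64 / (3 * \<delta>) + 1" unfolding rt by (rule of_int_ceiling_le_add_one)
  hence "real \<tau> * \<delta> \<le> (64 / (3 * \<delta>) + 1) * \<delta>" using assms by (intro mult_right_mono) auto
  also have "\<dots> = 64/3 + \<delta>" using assms by (simp add: field_simps)
  finally show "real \<tau> * \<delta> \<le> 67/3" using assms by simp
qed

lemma Dbound:
  fixes \<delta> L :: real
  assumes d: "0 < \<delta>" "\<delta> \<le> 1" and L: "0 < L" and w: "real \<tau> * \<delta> \<le> 67/3"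
  shows "4 * L + sqrt (80 * L^2 / (3 * \<delta>)) + sqrt (80 * (real \<tau>)^2 * L^2 / (3 * \<delta>))
          + sqrt (16 * real \<tau> * L^2 / 3) \<le> 273/2 * L / (\<delta> * sqrt \<delta>)"
proof -
  define P where "P = \<delta> * sqrt \<delta>"
  have P0: "0 < P" unfolding P_def using d by simp
  have P2: "P^2 = \<delta>^3" unfolding P_def using d by (simp add: power_mult_distrib power2_eq_square power3_eq_cube)
  have P1: "P \<le> 1" unfolding P_def using d by (simp add: mult_le_one)
  have w0: "0 \<le> real \<tau> * \<delta>" using d by simp
  have t1: "4 * L \<le> 4 * L / P" using P0 P1 L by (simp add: le_divide_eq mult_left_le)
  have t2: "sqrt (80 * L^2 / (3 * \<delta>)) \<le> 6 * L / P"
  proof (rule sqrt_le_div[OF P0])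
    have "80 * L^2 / (3 * \<delta>) * P^2 = 80/3 * L^2 * \<delta>^2" unfolding P2 using d by (simp add: power2_eq_square power3_eq_cube field_simps)
    also have "\<dots> \<le> 80/3 * L^2 * 1" using d by (intro mult_left_mono) (auto simp: power_le_one)
    also have "\<dots> \<le> (6 * L)^2" by (simp add: power2_eq_square)
    finally show "80 * L^2 / (3 * \<delta>) * P^2 \<le> (6 * L)^2" .
  qed (use L d in auto)
  have t3: "sqrt (80 * (real \<tau>)^2 * L^2 / (3 * \<delta>)) \<le> 231/2 * L / P"
  proof (rule sqrt_le_div[OF P0])
    have "80 * (real \<tau>)^2 * L^2 / (3 * \<delta>) * P^2 = 80/3 * L^2 * (real \<tau> * \<delta>)^2"
      unfolding P2 using d by (simp add: power2_eq_square power3_eq_cube field_simps)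
    also have "\<dots> \<le> 80/3 * L^2 * (67/3)^2" using w w0 by (intro mult_left_mono power_mono) auto
    also have "\<dots> \<le> (231/2 * L)^2" by (simp add: power2_eq_square)
    finally show "80 * (real \<tau>)^2 * L^2 / (3 * \<delta>) * P^2 \<le> (231/2 * L)^2" .
  qed (use L d in auto)
  have t4: "sqrt (16 * real \<tau> * L^2 / 3) \<le> 11 * L / P"
  proof (rule sqrt_le_div[OF P0])
    have "16 * real \<tau> * L^2 / 3 * P^2 = 16/3 * L^2 * ((real \<tau> * \<delta>) * \<delta>^2)"
      unfolding P2 by (simp add: power2_eq_square power3_eq_cube field_simps)
    also have "\<dots> \<le> 16/3 * L^2 * ((67/3) * 1)" using w w0 d
      by (intro mult_left_mono mult_mono) (auto simp: power_le_one)
    also have "\<dots> \<le> (11 * L)^2" by (simp add: power2_eq_square)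
    finally show "16 * real \<tau> * L^2 / 3 * P^2 \<le> (11 * L)^2" .
  qed (use L d in auto)
  have "4 * L / P + 6 * L / P + 231/2 * L / P + 11 * L / P = 273/2 * L / P"
    by (simp add: field_simps)
  thus ?thesis using t1 t2 t3 t4 unfolding P_def by linarith
qed

theorem theoremC4:
  fixes f :: "real ^ 'i::finite \<Rightarrow> real" and g :: "real ^ 'i \<Rightarrow> real ^ 'i"
    and coord :: "'i \<Rightarrow> nat \<times> nat \<times> nat"
    and NL :: nat and m n k :: "nat \<Rightarrow> nat" and L :: real
  assumes coord: "bij_betw coord UNIV (layer_dom NL m n)"
    and grad: "\<And>x. (f has_derivative (\<lambda>h. g x \<bullet> h)) (at x)"
    and A1: "bdd_below (range f)"
    and A2: "\<And>x y. norm (g x - g y) \<le> L * norm (x - y)"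
    and Lpos: "L > 0"
    and kpos: "\<And>l. l < NL \<Longrightarrow> 0 < k l"
    and klt: "\<And>l. l < NL \<Longrightarrow> k l < m l * n l"
  shows
   "(\<forall>(\<beta>1::real) (\<tau>::nat) (\<eta>::real) (x::nat \<Rightarrow> real ^ 'i) M S.
       0 < \<beta>1 \<and> \<beta>1 \<le> 1 \<and> real \<tau> \<ge> 64 / (3 * \<beta>1 * delta_min NL m n k) \<and>
       0 < \<eta> \<and>
       \<eta> \<le> min (min (1 / (4 * L)) (sqrt (3 * delta_min NL m n k * \<beta>1^2 / (80 * L^2))))
               (min (sqrt (3 * delta_min NL m n k / (80 * (real \<tau>)^2 * L^2)))
                    (sqrt (3 * \<beta>1 / (16 * real \<tau> * L^2)))) \<and>
       gasare_msgd coord NL k \<tau> \<beta>1 \<eta> g x M S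
       \<longrightarrow> (\<forall>K::nat. K \<ge> 1 \<longrightarrow>
             (1 / real (K * \<tau>)) * (\<Sum>t<K * \<tau>. (norm (g (x t)))^2)
               \<le> 16 * (f (x 0) - Inf (range f)) / (delta_min NL m n k * \<eta> * real (K * \<tau>))))
    \<and>
    (\<forall>(\<beta>1::real) (\<tau>::nat) (\<eta>::real) (x::nat \<Rightarrow> real ^ 'i) M S (T::nat).
       f (x 0) - Inf (range f) > 0 \<and>
       real T \<ge> 64 / (3 * delta_min NL m n k) \<and>
       \<beta>1 = 1 \<and>
       \<tau> = nat \<lceil>64 / (3 * delta_min NL m n k * \<beta>1)\<rceil> \<and>
       \<eta> = inverse (4 * L + sqrt (80 * L^2 / (3 * delta_min NL m n k * \<beta>1^2))
                    + sqrt (80 * (real \<tau>)^2 * L^2 / (3 * delta_min NL m n k))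
                    + sqrt (16 * real \<tau> * L^2 / (3 * \<beta>1))) \<and>
       gasare_msgd coord NL k \<tau> \<beta>1 \<eta> g x M S
       \<longrightarrow> (1 / real T) * (\<Sum>t<T. (norm (g (x t)))^2)
             \<le> 2200 * L * (f (x 0) - Inf (range f)) / (delta_min NL m n k powr (5/2) * real T))"
proof (intro conjI allI impI, goal_cases)
  case (1 \<beta>1 \<tau> \<eta> x M S K)
  define N where "N = real (K * \<tau>)"
  define X where "X = 16 * (f (x 0) - Inf (range f)) / (delta_min NL m n k * \<eta>)"
  have s: "(\<Sum>t<K * \<tau>. (norm (g (x t)))^2) \<le> X"
    unfolding X_def by (rule part1[OF coord grad A1 A2 Lpos kpos klt]) (use 1 in auto)
  have "1 / N * (\<Sum>t<K * \<tau>. (norm (g (x t)))^2) \<le> 1 / N * X"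
    using s by (intro mult_left_mono) (auto simp: N_def)
  also have "1 / N * X = 16 * (f (x 0) - Inf (range f)) / (delta_min NL m n k * \<eta> * N)"
    unfolding X_def by simp
  finally show ?case unfolding N_def .
next
  case (2 \<beta>1 \<tau> \<eta> x M S T)
  define \<delta> where "\<delta> = delta_min NL m n k"
  define \<Delta> where "\<Delta> = f (x 0) - Inf (range f)"
  have d0: "0 < \<delta>" and d1: "\<delta> \<le> 1" unfolding \<delta>_def using delta_props[OF coord kpos klt] by auto
  have D0: "0 < \<Delta>" using 2 unfolding \<Delta>_def by blast
  have hT: "64 / (3 * \<delta>) \<le> real T" using 2 unfolding \<delta>_def by blast
  have b1: "\<beta>1 = 1" using 2 by blast
  have ht: "\<tau> = nat \<lceil>64 / (3 * \<delta>)\<rceil>" using 2 unfolding \<delta>_def by simp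
  define s1 where "s1 = sqrt (80 * L^2 / (3 * \<delta>))"
  define s2 where "s2 = sqrt (80 * (real \<tau>)^2 * L^2 / (3 * \<delta>))"
  define s3 where "s3 = sqrt (16 * real \<tau> * L^2 / 3)"
  define Dv where "Dv = 4 * L + s1 + s2 + s3"
  have he: "\<eta> = inverse Dv" using 2 unfolding Dv_def s1_def s2_def s3_def \<delta>_def by simp
  have run: "gasare_msgd coord NL k \<tau> \<beta>1 \<eta> g x M S" using 2 by blast
  have tp: "64 / (3 * \<delta>) \<le> real \<tau>" "real \<tau> * \<delta> \<le> 67/3" using tau_props[OF d0 d1 ht] by auto
  have tau0: "0 < \<tau>"
  proof -
    have "0 < 64 / (3 * \<delta>)" using d0 by simp
    hence "0 < real \<tau>" using tp(1) by linarith
    thus ?thesis by simp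
  qed
  have s1p: "0 < s1" unfolding s1_def using d0 Lpos by simp
  have s2p: "0 < s2" unfolding s2_def using d0 Lpos tau0 by simp
  have s3p: "0 < s3" unfolding s3_def using Lpos tau0 by simp
  have Dp: "0 < Dv" unfolding Dv_def using s1p s2p s3p Lpos by simp
  have eta0: "0 < \<eta>" using he Dp by simp
  have i1: "\<eta> \<le> 1 / (4 * L)"
    unfolding he using Dp Lpos s1p s2p s3p by (simp add: Dv_def inverse_eq_divide frac_le)
  have inv_le: "\<eta> \<le> inverse s" if "0 < s" "s \<le> Dv" for s
    unfolding he using that by (intro le_imp_inverse_le) auto
  have i2: "\<eta> \<le> sqrt (3 * \<delta> * \<beta>1^2 / (80 * L^2))"
  proof -
    have "sqrt (3 * \<delta> * \<beta>1^2 / (80 * L^2)) = inverse s1"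
      unfolding s1_def b1 by (simp add: real_sqrt_inverse[symmetric] inverse_divide)
    thus ?thesis using inv_le[OF s1p] s2p s3p Lpos by (simp add: Dv_def)
  qed
  have i3: "\<eta> \<le> sqrt (3 * \<delta> / (80 * (real \<tau>)^2 * L^2))"
  proof -
    have "sqrt (3 * \<delta> / (80 * (real \<tau>)^2 * L^2)) = inverse s2"
      unfolding s2_def by (simp add: real_sqrt_inverse[symmetric] inverse_divide)
    thus ?thesis using inv_le[OF s2p] s1p s3p Lpos by (simp add: Dv_def)
  qed
  have i4: "\<eta> \<le> sqrt (3 * \<beta>1 / (16 * real \<tau> * L^2))"
  proof -
    have "sqrt (3 * \<beta>1 / (16 * real \<tau> * L^2)) = inverse s3"
      unfolding s3_def b1 by (simp add: real_sqrt_inverse[symmetric] inverse_divide)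
    thus ?thesis using inv_le[OF s3p] s1p s2p Lpos by (simp add: Dv_def)
  qed
  have S1: "(\<Sum>t<T * \<tau>. (norm (g (x t)))^2) \<le> 16 * \<Delta> / (\<delta> * \<eta>)"
    unfolding \<Delta>_def \<delta>_def
  proof (rule part1[OF coord grad A1 A2 Lpos kpos klt _ _ _ eta0 _ run])
    show "0 < \<beta>1" "\<beta>1 \<le> 1" using b1 by auto
    show "64 / (3 * \<beta>1 * delta_min NL m n k) \<le> real \<tau>" using tp(1) b1 unfolding \<delta>_def by simp
    show "\<eta> \<le> min (min (1 / (4 * L)) (sqrt (3 * delta_min NL m n k * \<beta>1\<^sup>2 / (80 * L\<^sup>2))))
            (min (sqrt (3 * delta_min NL m n k / (80 * (real \<tau>)\<^sup>2 * L\<^sup>2))) (sqrt (3 * \<beta>1 / (16 * real \<tau> * L\<^sup>2))))"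
      using i1 i2 i3 i4 unfolding \<delta>_def by simp
  qed
  have S2: "(\<Sum>t<T. (norm (g (x t)))^2) \<le> (\<Sum>t<T * \<tau>. (norm (g (x t)))^2)"
    using tau0 by (intro sum_mono2) auto
  have Dvb: "Dv \<le> 273/2 * L / (\<delta> * sqrt \<delta>)"
    unfolding Dv_def s1_def s2_def s3_def by (rule Dbound[OF d0 d1 Lpos tp(2)])
  have pw: "\<delta> powr (5/2) = \<delta> * (\<delta> * sqrt \<delta>)"
  proof -
    have "\<delta> powr (5/2) = \<delta> powr 2 * \<delta> powr (1/2)" by (simp add: powr_add[symmetric])
    thus ?thesis using d0 by (simp add: powr_half_sqrt power2_eq_square)
  qed
  have "16 * \<Delta> / (\<delta> * \<eta>) = 16 * \<Delta> * Dv / \<delta>" unfolding he using Dp d0 by (simp add: field_simps)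
  also have "\<dots> \<le> 16 * \<Delta> * (273/2 * L / (\<delta> * sqrt \<delta>)) / \<delta>"
    using Dvb D0 d0 by (intro divide_right_mono mult_left_mono) auto
  also have "\<dots> = 2184 * L * \<Delta> / \<delta> powr (5/2)" unfolding pw by (simp add: ac_simps)
  also have "\<dots> \<le> 2200 * L * \<Delta> / \<delta> powr (5/2)"
    using D0 Lpos d0 by (intro divide_right_mono mult_right_mono) auto
  finally have S3: "(\<Sum>t<T. (norm (g (x t)))^2) \<le> 2200 * L * \<Delta> / \<delta> powr (5/2)"
    using S1 S2 by linarith
  have "1 / real T * (\<Sum>t<T. (norm (g (x t)))^2) \<le> 1 / real T * (2200 * L * \<Delta> / \<delta> powr (5/2))"
    using S3 by (intro mult_left_mono) auto
  also have "\<dots> = 2200 * L * \<Delta> / (\<delta> powr (5/2) * real T)" by simp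
  finally show ?case unfolding \<Delta>_def \<delta>_def .
qed

end
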